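(* In the calculus $\lambda^{RE}$ described in the context: if $e_1\Rrightarrow e_2$, then for every constant $c$, $e_1\to^*c$ if and only if $e_2\to^*c$.
   Context: Syntax of $\lambda^{RE}$. Basic types $b ::= \mathsf{Bool}\mid\mathsf{Unit}$. Constants $c ::= \mathsf{true}\mid\mathsf{false}\mid\mathsf{unit}\mid (=_b)\mid (=_{(c,b)})$. Expressions $e ::= c\mid x\mid e\ e\mid \lambda x{:}\tau.\,e\mid \mathsf{BEq}_b\ e\ e\ e\mid \mathsf{XEq}_{x:\tau\to\tau}\ e\ e\ e$. Values $v ::= c\mid \lambda x{:}\tau.\,e\mid \mathsf{BEq}_b\ e\ e\ v\mid \mathsf{XEq}_{x:\tau\to\tau}\ e\ e\ v$. Types $\tau ::= \{x{:}b\mid e\}\mid x{:}\tau\to\tau\mid \mathsf{PEq}_{\tau}\{e\}\{e\}$. $e[x:=e']$ is capture-avoiding substitution. Reduction: evaluation contexts $E ::= \bullet\mid E\ e\mid v\ E\mid \mathsf{BEq}_b\ e\ e\ E\mid\mathsf{XEq}_{x:\tau\to\tau}\ e\ e\ E$; $E[e]\to E[e']$ if $e\to e'$; $(\lambda x{:}\tau.\,e)\ v\to e[x:=v]$; $(=_b)\ c_1\to(=_{(c_1,b)})$; $(=_{(c_1,b)})\ c_2\to\mathsf{true}$ if $c_1,c_2$ syntactically equal, else $\to\mathsf{false}$. $\to^*$ is the reflexive–transitive closure. Parallel reduction $e\Rrightarrow e'$ and $\tau\Rrightarrow\tau'$ is defined inductively: $x\Rrightarrow x$; $c\Rrightarrow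 c$; $\lambda x{:}\tau.e\Rrightarrow\lambda x{:}\tau'.e'$ if $\tau\Rrightarrow\tau'$, $e\Rrightarrow e'$; $e_1\ e_2\Rrightarrow e_1'\ e_2'$ if $e_i\Rrightarrow e_i'$; $(\lambda x{:}\tau.e)\ v\Rrightarrow e'[x:=v']$ if $e\Rrightarrow e'$ and $v\Rrightarrow v'$; $(=_b)\ c_1\Rrightarrow(=_{(c_1,b)})$; $(=_{(c_1,b)})\ c_2\Rrightarrow d$ where $d=\mathsf{true}$ if $c_1,c_2$ are syntactically equal and $d=\mathsf{false}$ otherwise; $\mathsf{BEq}_b\ e_l\ e_r\ e\Rrightarrow\mathsf{BEq}_b\ e_l'\ e_r'\ e'$ if $e_l\Rrightarrow e_l'$, $e_r\Rrightarrow e_r'$, $e\Rrightarrow e'$; $\mathsf{XEq}_{x:\tau_x\to\tau}\ e_l\ e_r\ e\Rrightarrow\mathsf{XEq}_{x:\tau_x'\to\tau'}\ e_l'\ e_r'\ e'$ if all five components parallel reduce; on types: $\{x{:}b\mid r\}\Rrightarrow\{x{:}b\mid r'\}$ if $r\Rrightarrow r'$; $x{:}\tau_x\to\tau\Rrightarrow x{:}\tau_x'\to\tau'$ if $\tau_x\Rrightarrow\tau_x'$, $\tau\Rrightarrow\tau'$; $\mathsf{PEq}_\tau\{e_l\}\{e_r\}\Rrightarrow\mathsf{PEq}_{\tau'}\{e_l'\}\{e_r'\}$ if all components parallel reduce. *)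

theory Defs
  imports Main
begin

text \<open>Binders: in Lam t e, e binds index 0; in TRefn b r, r binds index 0;
  in TFun tx t, t binds index 0; in XEq tx t el er e, t binds index 0.\<close>

datatype basic = TBool | TUnit

datatype const = CTrue | CFalse | CUnit | CEq basic | CEq1 const basic

datatype expr =
    Const const
  | Var nat
  | App expr expr
  | Lam ty expr
  | BEq basic expr expr expr
  | XEq ty ty expr expr expr
and ty =
    TRefn basic expr
  | TFun ty ty
  | TPEq ty expr expr

fun lift_e :: "nat \<Rightarrow> expr \<Rightarrow> expr" and lift_t :: "nat \<Rightarrow> ty \<Rightarrow> ty" where
  "lift_e c (Const k) = Const k"
| "lift_e c (Var i) = (if i < c then Var i else Var (Suc i))"
| "lift_e c (App e1 e2) = App (lift_e c e1) (lift_e c e2)"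
| "lift_e c (Lam t e) = Lam (lift_t c t) (lift_e (Suc c) e)"
| "lift_e c (BEq b el er e) = BEq b (lift_e c el) (lift_e c er) (lift_e c e)"
| "lift_e c (XEq tx t el er e) =
     XEq (lift_t c tx) (lift_t (Suc c) t) (lift_e c el) (lift_e c er) (lift_e c e)"
| "lift_t c (TRefn b r) = TRefn b (lift_e (Suc c) r)"
| "lift_t c (TFun tx t) = TFun (lift_t c tx) (lift_t (Suc c) t)"
| "lift_t c (TPEq t el er) = TPEq (lift_t c t) (lift_e c el) (lift_e c er)"

fun subst_e :: "nat \<Rightarrow> expr \<Rightarrow> expr \<Rightarrow> expr" and subst_t :: "nat \<Rightarrow> expr \<Rightarrow> ty \<Rightarrow> ty" where
  "subst_e j s (Const k) = Const k"
| "subst_e j s (Var i) = (if i < j then Var i else if i = j then s else Var (i - 1))"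
| "subst_e j s (App e1 e2) = App (subst_e j s e1) (subst_e j s e2)"
| "subst_e j s (Lam t e) = Lam (subst_t j s t) (subst_e (Suc j) (lift_e 0 s) e)"
| "subst_e j s (BEq b el er e) = BEq b (subst_e j s el) (subst_e j s er) (subst_e j s e)"
| "subst_e j s (XEq tx t el er e) =
     XEq (subst_t j s tx) (subst_t (Suc j) (lift_e 0 s) t) (subst_e j s el) (subst_e j s er) (subst_e j s e)"
| "subst_t j s (TRefn b r) = TRefn b (subst_e (Suc j) (lift_e 0 s) r)"
| "subst_t j s (TFun tx t) = TFun (subst_t j s tx) (subst_t (Suc j) (lift_e 0 s) t)"
| "subst_t j s (TPEq t el er) = TPEq (subst_t j s t) (subst_e j s el) (subst_e j s er)"

text \<open>e[x:=v] where x is the variable bound by the enclosing binder.\<close>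
definition subst0 :: "expr \<Rightarrow> expr \<Rightarrow> expr" where
  "subst0 e v = subst_e 0 v e"

fun is_val :: "expr \<Rightarrow> bool" where
  "is_val (Const k) = True"
| "is_val (Lam t e) = True"
| "is_val (BEq b el er v) = is_val v"
| "is_val (XEq tx t el er v) = is_val v"
| "is_val _ = False"

text \<open>Small-step reduction (evaluation contexts unfolded into congruence rules).\<close>
inductive step :: "expr \<Rightarrow> expr \<Rightarrow> bool" where
  step_app1: "step e e' \<Longrightarrow> step (App e e1) (App e' e1)"
| step_app2: "is_val v \<Longrightarrow> step e e' \<Longrightarrow> step (App v e) (App v e')"
| step_beq: "step e e' \<Longrightarrow> step (BEq b el er e) (BEq b el er e')"
| step_xeq: "step e e' \<Longrightarrow> step (XEq tx t el er e) (XEq tx t el er e')"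
| step_beta: "is_val v \<Longrightarrow> step (App (Lam t e) v) (subst0 e v)"
| step_eq: "step (App (Const (CEq b)) (Const c1)) (Const (CEq1 c1 b))"
| step_eq1: "step (App (Const (CEq1 c1 b)) (Const c2)) (Const (if c1 = c2 then CTrue else CFalse))"

abbreviation steps :: "expr \<Rightarrow> expr \<Rightarrow> bool" where
  "steps \<equiv> step\<^sup>*\<^sup>*"

inductive par_e :: "expr \<Rightarrow> expr \<Rightarrow> bool" and par_t :: "ty \<Rightarrow> ty \<Rightarrow> bool" where
  par_var: "par_e (Var x) (Var x)"
| par_const: "par_e (Const c) (Const c)"
| par_lam: "par_t t t' \<Longrightarrow> par_e e e' \<Longrightarrow> par_e (Lam t e) (Lam t' e')"
| par_app: "par_e e1 e1' \<Longrightarrow> par_e e2 e2' \<Longrightarrow> par_e (App e1 e2) (App e1' e2')"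
| par_beta: "is_val v \<Longrightarrow> par_e e e' \<Longrightarrow> par_e v v' \<Longrightarrow> par_e (App (Lam t e) v) (subst0 e' v')"
| par_eq: "par_e (App (Const (CEq b)) (Const c1)) (Const (CEq1 c1 b))"
| par_eq1: "par_e (App (Const (CEq1 c1 b)) (Const c2)) (Const (if c1 = c2 then CTrue else CFalse))"
| par_beq: "par_e el el' \<Longrightarrow> par_e er er' \<Longrightarrow> par_e e e' \<Longrightarrow> par_e (BEq b el er e) (BEq b el' er' e')"
| par_xeq: "par_t tx tx' \<Longrightarrow> par_t t t' \<Longrightarrow> par_e el el' \<Longrightarrow> par_e er er' \<Longrightarrow> par_e e e'
            \<Longrightarrow> par_e (XEq tx t el er e) (XEq tx' t' el' er' e')"
| par_refn: "par_e r r' \<Longrightarrow> par_t (TRefn b r) (TRefn b r')"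
| par_fun: "par_t tx tx' \<Longrightarrow> par_t t t' \<Longrightarrow> par_t (TFun tx t) (TFun tx' t')"
| par_peq: "par_t t t' \<Longrightarrow> par_e el el' \<Longrightarrow> par_e er er' \<Longrightarrow> par_t (TPEq t el er) (TPEq t' el' er')"

end

theory Submission
  imports Defs
begin

lemma lift_lift:
  "i \<le> c \<Longrightarrow> lift_e (Suc c) (lift_e i e) = lift_e i (lift_e c e)"
  "i \<le> c \<Longrightarrow> lift_t (Suc c) (lift_t i t) = lift_t i (lift_t c t)"
  by (induction e and t arbitrary: i c and i c) auto

lemma subst_lift:
  "subst_e i v (lift_e i e) = e"
  "subst_t i v (lift_t i t) = t"
  by (induction e and t arbitrary: i v and i v) auto

lemma lift_subst_le:
  "j \<le> c \<Longrightarrow> lift_e c (subst_e j s e) = subst_e j (lift_e c s) (lift_e (Suc c) e)"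
  "j \<le> c \<Longrightarrow> lift_t c (subst_t j s t) = subst_t j (lift_e c s) (lift_t (Suc c) t)"
  by (induction e and t arbitrary: j c s and j c s) (auto simp: lift_lift)

lemma lift_subst_ge:
  "i \<le> j \<Longrightarrow> lift_e i (subst_e j s e) = subst_e (Suc j) (lift_e i s) (lift_e i e)"
  "i \<le> j \<Longrightarrow> lift_t i (subst_t j s t) = subst_t (Suc j) (lift_e i s) (lift_t i t)"
  by (induction e and t arbitrary: i j s and i j s) (auto simp: lift_lift)

lemma subst_subst:
  "i \<le> j \<Longrightarrow> subst_e j s (subst_e i v e) = subst_e i (subst_e j s v) (subst_e (Suc j) (lift_e i s) e)"
  "i \<le> j \<Longrightarrow> subst_t j s (subst_t i v t) = subst_t i (subst_e j s v) (subst_t (Suc j) (lift_e i s) t)"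
  by (induction e and t arbitrary: i j s v and i j s v)
     (auto simp: lift_lift lift_subst_ge subst_lift)

lemma is_val_lift: "is_val e \<Longrightarrow> is_val (lift_e c e)"
  by (induction e arbitrary: c rule: is_val.induct) auto

lemma is_val_subst: "is_val e \<Longrightarrow> is_val (subst_e j s e)"
  by (induction e arbitrary: j s rule: is_val.induct) auto

lemma par_eq1': "d = (if c1 = c2 then CTrue else CFalse) \<Longrightarrow> par_e (App (Const (CEq1 c1 b)) (Const c2)) (Const d)"
  using par_eq1 by simp

lemma par_lift:
  "par_e e e' \<Longrightarrow> par_e (lift_e c e) (lift_e c e')"
  "par_t t t' \<Longrightarrow> par_t (lift_t c t) (lift_t c t')"
proof (induction arbitrary: c and c rule: par_e_par_t.inducts)
  case (par_beta v e e' v' t)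
  then show ?case
    by (auto simp: subst0_def lift_subst_le is_val_lift intro!: par_e_par_t.par_beta[simplified subst0_def])
next
  case (par_eq1 c1 b c2)
  then show ?case by (simp del: if_split add: par_eq1')
qed (auto intro: par_e_par_t.intros)

lemma par_subst:
  "par_e e e' \<Longrightarrow> par_e s s' \<Longrightarrow> par_e (subst_e j s e) (subst_e j s' e')"
  "par_t t t' \<Longrightarrow> par_e s s' \<Longrightarrow> par_t (subst_t j s t) (subst_t j s' t')"
proof (induction arbitrary: j s s' and j s s' rule: par_e_par_t.inducts)
  case (par_beta v e e' v' t)
  then show ?case
    by (auto simp: subst0_def subst_subst[of 0, simplified] is_val_subst par_lift
        intro!: par_e_par_t.par_beta[simplified subst0_def])
next
  case (par_eq1 c1 b c2)
  then show ?case by (simp del: if_split add: par_eq1')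
qed (auto intro!: par_e_par_t.intros par_lift, (metis par_lift)+)

lemma par_val: "par_e e e' \<Longrightarrow> is_val e \<Longrightarrow> is_val e'"
  "par_t t t' \<Longrightarrow> True"
  by (induction rule: par_e_par_t.inducts) auto

lemma val_nostep: "step e e' \<Longrightarrow> \<not> is_val e"
  by (induction rule: step.induct) auto

lemma par_refl: "par_e e e" "par_t t t"
  by (induction e and t) (auto intro: par_e_par_t.intros)

lemma steps_app1: "steps e e' \<Longrightarrow> steps (App e a) (App e' a)"
  by (induction rule: rtranclp_induct) (auto intro: rtranclp.rtrancl_into_rtrancl step.intros)
lemma steps_app2: "steps e e' \<Longrightarrow> is_val v \<Longrightarrow> steps (App v e) (App v e')"
  by (induction rule: rtranclp_induct) (auto intro: rtranclp.rtrancl_into_rtrancl step.intros)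
lemma steps_beq: "steps e e' \<Longrightarrow> steps (BEq b el er e) (BEq b el er e')"
  by (induction rule: rtranclp_induct) (auto intro: rtranclp.rtrancl_into_rtrancl step.intros)
lemma steps_xeq: "steps e e' \<Longrightarrow> steps (XEq tx t el er e) (XEq tx t el er e')"
  by (induction rule: rtranclp_induct) (auto intro: rtranclp.rtrancl_into_rtrancl step.intros)

lemma par_lam_inv: "par_e (Lam t b) f \<Longrightarrow> \<exists>t' b'. f = Lam t' b' \<and> par_e b b'"
  by (erule par_e.cases) auto

lemma par_const_inv: "par_e (Const c) f \<Longrightarrow> f = Const c"
  by (erule par_e.cases) auto

lemma stepA: "step e1 e1' \<Longrightarrow> par_e e1 e2 \<Longrightarrow> \<exists>e2'. steps e2 e2' \<and> par_e e1' e2'"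
proof (induction arbitrary: e2 rule: step.induct)
  case (step_app1 e e' e1)
  from step_app1.prems show ?case
  proof (cases rule: par_e.cases)
    case (par_app e1' e2')
    then obtain f where "steps e1' f" "par_e e' f" using step_app1.IH by blast
    then show ?thesis using par_app by (auto intro!: exI[of _ "App f e2'"] steps_app1 par_e_par_t.intros)
  qed (use val_nostep[OF step_app1.hyps] in auto)
next
  case (step_app2 v e e')
  from step_app2.prems show ?case
  proof (cases rule: par_e.cases)
    case (par_app e1' e2')
    then obtain f where "steps e2' f" "par_e e' f" using step_app2.IH by blast
    then show ?thesis using par_app step_app2.hyps par_val
      by (auto intro!: exI[of _ "App e1' f"] steps_app2 par_e_par_t.intros)
  qed (use val_nostep[OF step_app2.hyps(2)] in auto)
next
  case (step_beq e e' b el er)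
  from step_beq.prems show ?case
  proof (cases rule: par_e.cases)
    case (par_beq el' er' e2')
    then obtain f where "steps e2' f" "par_e e' f" using step_beq.IH by blast
    then show ?thesis using par_beq
      by (auto intro!: exI[of _ "BEq b el' er' f"] steps_beq par_e_par_t.intros)
  qed
next
  case (step_xeq e e' tx t el er)
  from step_xeq.prems show ?case
  proof (cases rule: par_e.cases)
    case (par_xeq tx' t' el' er' e2')
    then obtain f where "steps e2' f" "par_e e' f" using step_xeq.IH by blast
    then show ?thesis using par_xeq
      by (auto intro!: exI[of _ "XEq tx' t' el' er' f"] steps_xeq par_e_par_t.intros)
  qed
next
  case (step_beta v t e)
  from step_beta.prems show ?case
  proof (cases rule: par_e.cases)
    case (par_app f v')
    then obtain t' b' where f: "f = Lam t' b'" "par_e e b'" using par_lam_inv by blast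
    have "step e2 (subst0 b' v')" using par_app f step_beta.hyps par_val
      by (auto intro: step.step_beta)
    moreover have "par_e (subst0 e v) (subst0 b' v')"
      using par_app f par_subst unfolding subst0_def by blast
    ultimately show ?thesis by blast
  next
    case (par_beta e' v')
    then show ?thesis using par_subst unfolding subst0_def by blast
  qed
next
  case (step_eq b c1)
  from step_eq.prems show ?case
  proof (cases rule: par_e.cases)
    case (par_app e1' e2')
    then show ?thesis using par_const_inv step.step_eq
      by (metis par_e_par_t.par_const r_into_rtranclp)
  qed (auto intro: par_e_par_t.intros)
next
  case (step_eq1 c1 b c2)
  from step_eq1.prems show ?case
  proof (cases rule: par_e.cases)
    case (par_app e1' e2')
    then show ?thesis using par_const_inv step.step_eq1
      by (metis par_e_par_t.par_const r_into_rtranclp)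
  qed (auto intro: par_e_par_t.intros)
qed

lemma forward: "steps e1 (Const c) \<Longrightarrow> par_e e1 e2 \<Longrightarrow> steps e2 (Const c)"
proof (induction arbitrary: e2 rule: converse_rtranclp_induct)
  case base
  then show ?case using par_const_inv by blast
next
  case (step y z)
  then obtain e2' where "steps e2 e2'" "par_e z e2'" using stepA by blast
  then show ?case using step.IH by (meson rtranclp_trans)
qed

fun occ :: "nat \<Rightarrow> expr \<Rightarrow> nat" where
  "occ j (Const k) = 0"
| "occ j (Var i) = (if i = j then 1 else 0)"
| "occ j (App e1 e2) = occ j e1 + occ j e2"
| "occ j (Lam t e) = occ (Suc j) e"
| "occ j (BEq b el er e) = occ j el + occ j er + occ j e"
| "occ j (XEq tx t el er e) = occ j el + occ j er + occ j e"

lemma occ_lift_same: "occ c (lift_e c s) = 0"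
  by (induction s arbitrary: c) auto

lemma occ_lift_lt: "i < c \<Longrightarrow> occ i (lift_e c s) = occ i s"
  by (induction s arbitrary: i c) auto

lemma occ_lift_ge: "c \<le> i \<Longrightarrow> occ (Suc i) (lift_e c s) = occ i s"
  by (induction s arbitrary: i c) auto

lemma occ_subst_lt: "i < j \<Longrightarrow> occ i (subst_e j s e) = occ i e + occ j e * occ i s"
  by (induction e arbitrary: i j s) (auto simp: occ_lift_ge algebra_simps)

lemma occ_subst_ge: "j \<le> i \<Longrightarrow> occ i (subst_e j s e) = occ (Suc i) e + occ j e * occ i s"
  by (induction e arbitrary: i j s) (auto simp: occ_lift_ge algebra_simps)

inductive parw :: "nat \<Rightarrow> expr \<Rightarrow> expr \<Rightarrow> bool" where
  pw_var: "parw n (Var x) (Var x)"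
| pw_const: "parw n (Const c) (Const c)"
| pw_lam: "par_t t t' \<Longrightarrow> parw n e e' \<Longrightarrow> parw n (Lam t e) (Lam t' e')"
| pw_app: "parw n1 e1 e1' \<Longrightarrow> parw n2 e2 e2' \<Longrightarrow> parw (n1 + n2) (App e1 e2) (App e1' e2')"
| pw_beta: "is_val v \<Longrightarrow> parw n1 e e' \<Longrightarrow> parw n2 v v'
    \<Longrightarrow> parw (Suc (n1 + occ 0 e' * n2)) (App (Lam t e) v) (subst0 e' v')"
| pw_eq: "parw n (App (Const (CEq b)) (Const c1)) (Const (CEq1 c1 b))"
| pw_eq1: "parw n (App (Const (CEq1 c1 b)) (Const c2)) (Const (if c1 = c2 then CTrue else CFalse))"
| pw_beq: "parw n1 el el' \<Longrightarrow> parw n2 er er' \<Longrightarrow> parw n3 e e'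
    \<Longrightarrow> parw (n1 + n2 + n3) (BEq b el er e) (BEq b el' er' e')"
| pw_xeq: "par_t tx tx' \<Longrightarrow> par_t t t' \<Longrightarrow> parw n1 el el' \<Longrightarrow> parw n2 er er' \<Longrightarrow> parw n3 e e'
    \<Longrightarrow> parw (n1 + n2 + n3) (XEq tx t el er e) (XEq tx' t' el' er' e')"

lemma pw_eq1': "d = (if c1 = c2 then CTrue else CFalse) \<Longrightarrow> parw n (App (Const (CEq1 c1 b)) (Const c2)) (Const d)"
  using pw_eq1 by simp

lemma pw_beta': "is_val v \<Longrightarrow> parw n1 e e' \<Longrightarrow> parw n2 v v' \<Longrightarrow> k = Suc (n1 + occ 0 e' * n2)
    \<Longrightarrow> r = subst0 e' v' \<Longrightarrow> parw k (App (Lam t e) v) r"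
  using pw_beta by simp

lemma parw_par: "parw n e e' \<Longrightarrow> par_e e e'"
  by (induction rule: parw.induct) (auto simp del: if_split intro: par_e_par_t.intros par_eq1')

lemma par_parw: "par_e e e' \<Longrightarrow> \<exists>n. parw n e e'" "par_t t t' \<Longrightarrow> True"
proof (induction rule: par_e_par_t.inducts)
  case (par_eq1 c1 b c2)
  then show ?case using pw_eq1 by blast
qed (auto intro: parw.intros)

lemma parw_mono: "parw n e e' \<Longrightarrow> n \<le> m \<Longrightarrow> parw m e e'"
proof (induction arbitrary: m rule: parw.induct)
  case (pw_app n1 e1 e1' n2 e2 e2')
  then have "parw (m - n2) e1 e1'" by simp
  then show ?case using pw_app parw.pw_app[of "m - n2" e1 e1' n2 e2 e2'] by simp
next
  case (pw_beta v n1 e e' n2 v' t)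
  then have "parw (m - Suc (occ 0 e' * n2)) e e'" by simp
  then show ?case using pw_beta by (intro pw_beta'[of v "m - Suc (occ 0 e' * n2)" e e' n2 v']) auto
next
  case (pw_beq n1 el el' n2 er er' n3 e e' b)
  then have "parw (m - n2 - n3) el el'" by simp
  then show ?case using pw_beq parw.pw_beq[of "m - n2 - n3" el el' n2 er er' n3 e e' b] by simp
next
  case (pw_xeq tx tx' t t' n1 el el' n2 er er' n3 e e')
  then have "parw (m - n2 - n3) el el'" by simp
  then show ?case using pw_xeq parw.pw_xeq[of tx tx' t t' "m - n2 - n3" el el' n2 er er' n3 e e'] by simp
next
  case (pw_eq1 c1 b c2)
  then show ?case by (simp del: if_split add: pw_eq1')
qed (auto intro: parw.intros)

lemma parw_lift: "parw n e e' \<Longrightarrow> parw n (lift_e c e) (lift_e c e')"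
proof (induction arbitrary: c rule: parw.induct)
  case (pw_beta v n1 e e' n2 v' t)
  then show ?case
    by (auto simp: subst0_def lift_subst_le is_val_lift occ_lift_lt intro!: pw_beta'[where r = "subst_e 0 _ _", simplified subst0_def])
next
  case (pw_eq1 c1 b c2)
  then show ?case by (simp del: if_split add: pw_eq1')
qed (auto intro: parw.intros par_lift)

lemma parw_subst: "parw n e e' \<Longrightarrow> parw m s s' \<Longrightarrow> parw (n + occ j e' * m) (subst_e j s e) (subst_e j s' e')"
proof (induction arbitrary: j s s' m rule: parw.induct)
  case (pw_var n x)
  then show ?case by (auto intro: parw.intros parw_mono)
next
  case (pw_lam t t' n e e')
  have "parw (n + occ (Suc j) e' * m) (subst_e (Suc j) (lift_e 0 s) e) (subst_e (Suc j) (lift_e 0 s') e')"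
    using pw_lam parw_lift by blast
  moreover have "par_t (subst_t j s t) (subst_t j s' t')"
    using pw_lam par_subst(2) parw_par by blast
  ultimately show ?case by (simp add: parw.pw_lam)
next
  case (pw_app n1 e1 e1' n2 e2 e2')
  have "parw (n1 + occ j e1' * m) (subst_e j s e1) (subst_e j s' e1')"
    by (rule pw_app.IH(1)) (rule pw_app.prems)
  moreover have "parw (n2 + occ j e2' * m) (subst_e j s e2) (subst_e j s' e2')"
    by (rule pw_app.IH(2)) (rule pw_app.prems)
  ultimately have "parw ((n1 + occ j e1' * m) + (n2 + occ j e2' * m)) (subst_e j s (App e1 e2)) (subst_e j s' (App e1' e2'))"
    by (simp add: parw.pw_app)
  then show ?case by (simp add: algebra_simps)
next
  case (pw_beta v n1 e e' n2 v' t)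
  have h1: "parw (n1 + occ (Suc j) e' * m) (subst_e (Suc j) (lift_e 0 s) e) (subst_e (Suc j) (lift_e 0 s') e')"
    by (rule pw_beta.IH(1)) (rule parw_lift[OF pw_beta.prems])
  have h2: "parw (n2 + occ j v' * m) (subst_e j s v) (subst_e j s' v')"
    by (rule pw_beta.IH(2)) (rule pw_beta.prems)
  show ?case
    apply simp
    apply (rule pw_beta'[OF is_val_subst[OF pw_beta(1)] h1 h2])
    by (auto simp: subst0_def subst_subst[of 0, simplified] occ_subst_lt occ_subst_ge occ_lift_same algebra_simps)
next
  case (pw_eq1 c1 b c2)
  then show ?case by (simp del: if_split add: pw_eq1')
next
  case (pw_beq n1 el el' n2 er er' n3 e e' b)
  have "parw (n1 + occ j el' * m) (subst_e j s el) (subst_e j s' el')"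
    by (rule pw_beq.IH(1)) (rule pw_beq.prems)
  moreover have "parw (n2 + occ j er' * m) (subst_e j s er) (subst_e j s' er')"
    by (rule pw_beq.IH(2)) (rule pw_beq.prems)
  moreover have "parw (n3 + occ j e' * m) (subst_e j s e) (subst_e j s' e')"
    by (rule pw_beq.IH(3)) (rule pw_beq.prems)
  ultimately have "parw ((n1 + occ j el' * m) + (n2 + occ j er' * m) + (n3 + occ j e' * m)) (subst_e j s (BEq b el er e)) (subst_e j s' (BEq b el' er' e'))"
    by (simp add: parw.pw_beq)
  then show ?case by (simp add: algebra_simps)
next
  case (pw_xeq tx tx' t t' n1 el el' n2 er er' n3 e e')
  have ps: "par_e s s'" using parw_par pw_xeq.prems by blast
  have "par_t (subst_t j s tx) (subst_t j s' tx')" using par_subst(2)[OF pw_xeq.hyps(1) ps] .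
  moreover have "par_t (subst_t (Suc j) (lift_e 0 s) t) (subst_t (Suc j) (lift_e 0 s') t')"
    using par_subst(2)[OF pw_xeq.hyps(2) par_lift(1)[OF ps]] .
  moreover have "parw (n1 + occ j el' * m) (subst_e j s el) (subst_e j s' el')"
    by (rule pw_xeq.IH(1)) (rule pw_xeq.prems)
  moreover have "parw (n2 + occ j er' * m) (subst_e j s er) (subst_e j s' er')"
    by (rule pw_xeq.IH(2)) (rule pw_xeq.prems)
  moreover have "parw (n3 + occ j e' * m) (subst_e j s e) (subst_e j s' e')"
    by (rule pw_xeq.IH(3)) (rule pw_xeq.prems)
  ultimately have "parw ((n1 + occ j el' * m) + (n2 + occ j er' * m) + (n3 + occ j e' * m)) (subst_e j s (XEq tx t el er e)) (subst_e j s' (XEq tx' t' el' er' e'))"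
    by (simp add: parw.pw_xeq del: subst_t.simps)
  then show ?case by (simp add: algebra_simps)
qed (auto intro: parw.intros)

lemma parw_subst0: "parw n1 e e' \<Longrightarrow> parw n2 v v' \<Longrightarrow> parw (n1 + occ 0 e' * n2) (subst0 e v) (subst0 e' v')"
  unfolding subst0_def by (rule parw_subst)

lemma lemV: "parw n e v \<Longrightarrow> is_val v \<Longrightarrow> \<exists>w. steps e w \<and> is_val w \<and> par_e w v"
proof (induction n arbitrary: e v rule: less_induct)
  case (less n)
  have "parw k e v \<Longrightarrow> k \<le> n \<Longrightarrow> is_val v \<Longrightarrow> \<exists>w. steps e w \<and> is_val w \<and> par_e w v" for k e v
  proof (induction rule: parw.induct)
    case (pw_const n c)
    then show ?case by (auto intro: par_e_par_t.intros)
  next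
    case (pw_lam t t' n e e')
    then have "par_e (Lam t e) (Lam t' e')" by (auto intro!: par_e_par_t.intros dest: parw_par)
    then show ?case by auto
  next
    case (pw_beta v n1 e e' n2 v' t)
    have "parw (n1 + occ 0 e' * n2) (subst0 e v) (subst0 e' v')"
      using parw_subst0[OF pw_beta.hyps(2,3)] .
    moreover have "n1 + occ 0 e' * n2 < n" using pw_beta.prems by simp
    ultimately obtain w where w: "steps (subst0 e v) w" "is_val w" "par_e w (subst0 e' v')"
      using less.IH pw_beta.prems by blast
    have "step (App (Lam t e) v) (subst0 e v)" using pw_beta.hyps(1) by (rule step_beta)
    then show ?case using w by (meson converse_rtranclp_into_rtranclp)
  next
    case (pw_eq n b c1)
    then show ?case by (meson is_val.simps(1) par_e_par_t.par_const r_into_rtranclp step.step_eq)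
  next
    case (pw_eq1 n c1 b c2)
    then show ?case by (meson is_val.simps(1) par_e_par_t.par_const r_into_rtranclp step.step_eq1)
  next
    case (pw_beq n1 el el' n2 er er' n3 e e' b)
    then obtain w where w: "steps e w" "is_val w" "par_e w e'" by auto
    then show ?case using pw_beq parw_par
      by (auto intro!: exI[of _ "BEq b el er w"] steps_beq par_e_par_t.intros)
  next
    case (pw_xeq tx tx' t t' n1 el el' n2 er er' n3 e e')
    then obtain w where w: "steps e w" "is_val w" "par_e w e'" by auto
    then show ?case using pw_xeq parw_par
      by (auto intro!: exI[of _ "XEq tx t el er w"] steps_xeq par_e_par_t.intros)
  qed auto
  then show ?case using less.prems by blast
qed

definition root_beta :: "nat \<Rightarrow> expr \<Rightarrow> expr \<Rightarrow> bool" where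
  "root_beta k e1 e2 \<longleftrightarrow> (\<exists>t b u b' u' n1 n2. e1 = App (Lam t b) u \<and> is_val u \<and> parw n1 b b'
      \<and> parw n2 u u' \<and> k = Suc (n1 + occ 0 b' * n2) \<and> e2 = subst0 b' u')"

lemma parw_app_inv: "parw k e1 (App x y) \<Longrightarrow>
  (\<exists>n1 n2 f g. e1 = App f g \<and> parw n1 f x \<and> parw n2 g y \<and> k = n1 + n2) \<or> root_beta k e1 (App x y)"
  unfolding root_beta_def by (erule parw.cases) blast+

lemma parw_beq_inv: "parw k e1 (BEq b el' er' e') \<Longrightarrow>
  (\<exists>n3 el er e. e1 = BEq b el er e \<and> parw n3 e e' \<and> par_e el el' \<and> par_e er er' \<and> n3 \<le> k)
  \<or> root_beta k e1 (BEq b el' er' e')"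
  by (erule parw.cases) (auto simp: root_beta_def dest: parw_par)

lemma parw_xeq_inv: "parw k e1 (XEq tx' t' el' er' e') \<Longrightarrow>
  (\<exists>n3 tx t el er e. e1 = XEq tx t el er e \<and> parw n3 e e' \<and> par_t tx tx' \<and> par_t t t' \<and> par_e el el' \<and> par_e er er' \<and> n3 \<le> k)
  \<or> root_beta k e1 (XEq tx' t' el' er' e')"
  by (erule parw.cases) (auto simp: root_beta_def dest: parw_par)

lemma par_lam_inv2: "par_e x (Lam t e) \<Longrightarrow> is_val x \<Longrightarrow> \<exists>t0 b0. x = Lam t0 b0 \<and> par_e b0 e"
  by (erule par_e.cases) auto

lemma par_const_inv2: "par_e x (Const c) \<Longrightarrow> is_val x \<Longrightarrow> x = Const c"
  by (erule par_e.cases) auto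

lemma lemL: "parw n e1 e2 \<Longrightarrow> step e2 e3 \<Longrightarrow> \<exists>e1'. steps e1 e1' \<and> par_e e1' e3"
proof (induction n arbitrary: e1 e2 e3 rule: less_induct)
  case (less n)
  have root: "\<exists>e1'. steps e1 e1' \<and> par_e e1' e3" if rb: "root_beta k e1 e2" and kn: "k \<le> n" and st: "step e2 e3" for k e1 e2 e3
  proof -
    obtain t b u b' u' n1 n2 where r: "e1 = App (Lam t b) u" "is_val u" "parw n1 b b'"
      "parw n2 u u'" "k = Suc (n1 + occ 0 b' * n2)" "e2 = subst0 b' u'"
      using rb unfolding root_beta_def by blast
    have "parw (n1 + occ 0 b' * n2) (subst0 b u) e2" using parw_subst0[OF r(3,4)] r(6) by simp
    moreover have "n1 + occ 0 b' * n2 < n" using r(5) kn by simp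
    ultimately obtain w where w: "steps (subst0 b u) w" "par_e w e3" using less.IH st by blast
    have "step e1 (subst0 b u)" using r(1,2) by (simp add: step_beta)
    then show ?thesis using w by (meson converse_rtranclp_into_rtranclp)
  qed
  have "step e2 e3 \<Longrightarrow> parw k e1 e2 \<Longrightarrow> k \<le> n \<Longrightarrow> \<exists>e1'. steps e1 e1' \<and> par_e e1' e3" for k e1 e2 e3
  proof (induction arbitrary: k e1 rule: step.induct)
    case (step_app1 e e' a)
    from parw_app_inv[OF step_app1.prems(1)] show ?case
    proof
      assume "\<exists>n1 n2 f g. e1 = App f g \<and> parw n1 f e \<and> parw n2 g a \<and> k = n1 + n2"
      then obtain n1 n2 f g where h: "e1 = App f g" "parw n1 f e" "parw n2 g a" "k = n1 + n2" by blast
      then obtain f1 where "steps f f1" "par_e f1 e'" using step_app1.IH step_app1.prems(2) by fastforce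
      then show ?thesis using h by (auto intro!: exI[of _ "App f1 g"] steps_app1 par_e_par_t.intros dest: parw_par)
    qed (erule root[OF _ step_app1.prems(2) step.step_app1[OF step_app1.hyps]])
  next
    case (step_app2 v e e')
    from parw_app_inv[OF step_app2.prems(1)] show ?case
    proof
      assume "\<exists>n1 n2 f g. e1 = App f g \<and> parw n1 f v \<and> parw n2 g e \<and> k = n1 + n2"
      then obtain n1 n2 f g where h: "e1 = App f g" "parw n1 f v" "parw n2 g e" "k = n1 + n2" by blast
      then obtain g1 where g1: "steps g g1" "par_e g1 e'" using step_app2.IH step_app2.prems(2) by fastforce
      obtain w where w: "steps f w" "is_val w" "par_e w v" using lemV[OF h(2) step_app2.hyps(1)] by blast
      have "steps e1 (App w g1)" using h(1) w g1 steps_app1 steps_app2 by (meson rtranclp_trans)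
      then show ?thesis using w g1 by (auto intro!: par_e_par_t.intros)
    qed (erule root[OF _ step_app2.prems(2) step.step_app2[OF step_app2.hyps]])
  next
    case (step_beq e e' b el er)
    from parw_beq_inv[OF step_beq.prems(1)] show ?case
    proof
      assume "\<exists>n3 el0 er0 e0. e1 = BEq b el0 er0 e0 \<and> parw n3 e0 e \<and> par_e el0 el \<and> par_e er0 er \<and> n3 \<le> k"
      then obtain n3 el0 er0 e0 where h: "e1 = BEq b el0 er0 e0" "parw n3 e0 e" "par_e el0 el" "par_e er0 er" "n3 \<le> k" by blast
      then obtain g1 where g1: "steps e0 g1" "par_e g1 e'" using step_beq.IH step_beq.prems(2) by fastforce
      then show ?thesis using h by (auto intro!: exI[of _ "BEq b el0 er0 g1"] steps_beq par_e_par_t.intros)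
    qed (erule root[OF _ step_beq.prems(2) step.step_beq[OF step_beq.hyps]])
  next
    case (step_xeq e e' tx t el er)
    from parw_xeq_inv[OF step_xeq.prems(1)] show ?case
    proof
      assume "\<exists>n3 tx0 t0 el0 er0 e0. e1 = XEq tx0 t0 el0 er0 e0 \<and> parw n3 e0 e \<and> par_t tx0 tx \<and> par_t t0 t \<and> par_e el0 el \<and> par_e er0 er \<and> n3 \<le> k"
      then obtain n3 tx0 t0 el0 er0 e0 where h: "e1 = XEq tx0 t0 el0 er0 e0" "parw n3 e0 e" "par_t tx0 tx" "par_t t0 t" "par_e el0 el" "par_e er0 er" "n3 \<le> k" by blast
      then obtain g1 where g1: "steps e0 g1" "par_e g1 e'" using step_xeq.IH step_xeq.prems(2) by fastforce
      then show ?thesis using h by (auto intro!: exI[of _ "XEq tx0 t0 el0 er0 g1"] steps_xeq par_e_par_t.intros)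
    qed (erule root[OF _ step_xeq.prems(2) step.step_xeq[OF step_xeq.hyps]])
  next
    case (step_beta v t e)
    from parw_app_inv[OF step_beta.prems(1)] show ?case
    proof
      assume "\<exists>n1 n2 f g. e1 = App f g \<and> parw n1 f (Lam t e) \<and> parw n2 g v \<and> k = n1 + n2"
      then obtain n1 n2 f g where h: "e1 = App f g" "parw n1 f (Lam t e)" "parw n2 g v" "k = n1 + n2" by blast
      obtain wf where wf: "steps f wf" "is_val wf" "par_e wf (Lam t e)" using lemV[OF h(2)] by auto
      then obtain t0 b0 where tb: "wf = Lam t0 b0" "par_e b0 e" using par_lam_inv2 by blast
      obtain wg where wg: "steps g wg" "is_val wg" "par_e wg v" using lemV[OF h(3) step_beta.hyps] by blast
      have "steps e1 (App wf wg)" using h(1) wf wg steps_app1 steps_app2 by (meson rtranclp_trans)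
      moreover have "step (App wf wg) (subst0 b0 wg)" using tb wg by (simp add: step.step_beta)
      ultimately have "steps e1 (subst0 b0 wg)" by simp
      moreover have "par_e (subst0 b0 wg) (subst0 e v)" using tb wg par_subst unfolding subst0_def by blast
      ultimately show ?thesis by blast
    qed (erule root[OF _ step_beta.prems(2) step.step_beta[OF step_beta.hyps]])
  next
    case (step_eq b c1)
    from parw_app_inv[OF step_eq.prems(1)] show ?case
    proof
      assume "\<exists>n1 n2 f g. e1 = App f g \<and> parw n1 f (Const (CEq b)) \<and> parw n2 g (Const c1) \<and> k = n1 + n2"
      then obtain n1 n2 f g where h: "e1 = App f g" "parw n1 f (Const (CEq b))" "parw n2 g (Const c1)" by blast
      obtain wf where wf: "steps f wf" "is_val wf" "par_e wf (Const (CEq b))" using lemV[OF h(2)] by auto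
      obtain wg where wg: "steps g wg" "is_val wg" "par_e wg (Const c1)" using lemV[OF h(3)] by auto
      have "steps e1 (App (Const (CEq b)) (Const c1))" using h(1) wf wg steps_app1 steps_app2 par_const_inv2
        by (metis rtranclp_trans)
      then have "steps e1 (Const (CEq1 c1 b))" using step.step_eq by (simp add: rtranclp.rtrancl_into_rtrancl)
      then show ?thesis by (auto intro: par_e_par_t.intros)
    qed (erule root[OF _ step_eq.prems(2) step.step_eq])
  next
    case (step_eq1 c1 b c2)
    from parw_app_inv[OF step_eq1.prems(1)] show ?case
    proof
      assume "\<exists>n1 n2 f g. e1 = App f g \<and> parw n1 f (Const (CEq1 c1 b)) \<and> parw n2 g (Const c2) \<and> k = n1 + n2"
      then obtain n1 n2 f g where h: "e1 = App f g" "parw n1 f (Const (CEq1 c1 b))" "parw n2 g (Const c2)" by blast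
      obtain wf where wf: "steps f wf" "is_val wf" "par_e wf (Const (CEq1 c1 b))" using lemV[OF h(2)] by auto
      obtain wg where wg: "steps g wg" "is_val wg" "par_e wg (Const c2)" using lemV[OF h(3)] by auto
      have "steps e1 (App (Const (CEq1 c1 b)) (Const c2))" using h(1) wf wg steps_app1 steps_app2 par_const_inv2
        by (metis rtranclp_trans)
      then have "steps e1 (Const (if c1 = c2 then CTrue else CFalse))"
        using step.step_eq1 by (meson rtranclp.rtrancl_into_rtrancl)
      then show ?thesis by (auto intro: par_e_par_t.intros)
    qed (erule root[OF _ step_eq1.prems(2) step.step_eq1])
  qed
  then show ?case using less.prems by blast
qed

lemma backward: "steps e2 (Const c) \<Longrightarrow> par_e e1 e2 \<Longrightarrow> steps e1 (Const c)"
proof (induction arbitrary: e1 rule: converse_rtranclp_induct)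
  case base
  then obtain n where "parw n e1 (Const c)" using par_parw by blast
  then obtain w where "steps e1 w" "is_val w" "par_e w (Const c)" using lemV by fastforce
  then show ?case using par_const_inv2 by blast
next
  case (step y z)
  then obtain n where "parw n e1 y" using par_parw by blast
  then obtain e1' where "steps e1 e1'" "par_e e1' z" using lemL step.hyps(1) by blast
  then show ?case using step.IH by (meson rtranclp_trans)
qed

theorem theoremC16:
  assumes "par_e e1 e2"
  shows "\<forall>c. steps e1 (Const c) \<longleftrightarrow> steps e2 (Const c)"
  using assms forward backward by blast

end
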